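(* Let $p$ be an odd prime and $k\ge 0$. For every $s\ge 1$, every $0\le l<p^k$ and every $0\le l'<p^{k+1}$, $$\sum_{P\in\mathcal P(V_{s,l})}(-1)^{\mathrm{inv}(P)}=0\qquad\text{and}\qquad \sum_{P\in\mathcal P(W_{s+1,l'})}(-1)^{\mathrm{inv}(P)}=0 .$$
   Context: Fix an odd prime $p$ and an integer $k\ge 0$. For integers $0\le i<n$ write $\lambda(n,i)=(n-i,1^i)$ for the hook partition of $n$ with $n-i$ boxes in its first row and $i$ further boxes in its first column. If $\mu=\lambda(n',i')$ is obtained from $\lambda(n,i)$ by appending $m=(n'-i')-(n-i)\ge 0$ boxes to the first row and $n''=i'-i\ge 0$ boxes to the first column, we say $\mu$ is obtained by adding the block $B_{m,n''}$ ($m$ horizontal nodes, $n''$ vertical nodes). Put $x_s=p^k(sp-(s+1))$. The relevant part ("column $k$") of the $p$-Bratteli diagram is the graded directed graph with vertices: on floor $2k+1$, $S_i=\lambda(p^k(p-1),i)$ for $0\le i<p^k(p-1)$; on floor $2(k+s)$ ($s\ge1$), $V_{s,l}=\lambda\big(p^k(2sp-(2s+1)),\,x_s+l\big)$ for $0\le l<p^k$; on floor $2(k+s)-1$ ($s\ge2$), $W_{s,l'}=\lambda\big(p^k((2s-1)p-2s),\,x_{s-1}+l'\big)$ for $0\le l'<p^{k+1}$; and edges, each labelled by the block added: (E1) $S_i\to V_{1,l}$ exactly when $i=p^kt+l$ with $0\le t\le p-2$, block $B_{p^kt,\,p^k(p-2-t)}$; (E2) for $s\ge2$, $0\le l<p^k$,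 $0\le\beta\le p-1$: $V_{s-1,l}\to W_{s,pl+\beta}$, block $B_{p^k(p-1)-((p-1)l+\beta),\,(p-1)l+\beta}$; (E3) for $s\ge 2$, $0\le l'<p^{k+1}$ and $t=\lfloor l'/p^k\rfloor$: $W_{s,l'}\to V_{s,l'-p^kt}$, block $B_{p^kt,\,p^k(p-1-t)}$. A path ending at a vertex $v$ is a sequence of edges starting at some $S_i$ and going up one floor at a time to $v$ ($S_i\to V_{1,\cdot}\to W_{2,\cdot}\to V_{2,\cdot}\to W_{3,\cdot}\to\cdots\to v$); $\mathcal P(v)$ is the set of all paths ending at $v$. The blocks of a path are numbered $B^2,B^3,\dots,B^N$: $B^2$ is the block of the edge leaving $S_i$, and for $j\ge2$, $B^{2j-1}$ is the block of the edge into $W_{j,\cdot}$ and $B^{2j}$ the block of the edge into $V_{j,\cdot}$. Write $B^j=B_{m_j,n_j}$. Inversions: $(1,2)\in\mathrm{Inv}(P)$ iff $m_2=p^kt$ with $0\le t<\frac{p-1}{2}$; for $3\le i<j\le N$, $(i,j)\in\mathrm{Inv}(P)$ iff $m_i>m_j$ and $n_i<n_j$; no other pairs are inversions. $\mathrm{inv}(P)=|\mathrm{Inv}(P)|$. *)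

theory Defs
  imports "HOL-Computational_Algebra.Primes"
begin

text \<open>Vertices of column k of the p-Bratteli diagram:
  S i  = S_i (floor 2k+1),  V s l = V_{s,l} (floor 2(k+s)),  W s l' = W_{s,l'} (floor 2(k+s)-1).\<close>
datatype vert = S nat | V nat nat | W nat nat

text \<open>A block B_{m,n} is recorded as the pair (m, n): m horizontal, n vertical nodes.
  A labelled edge is a triple (source, target, block).\<close>
type_synonym ledge = "vert \<times> vert \<times> (nat \<times> nat)"

definition bedge :: "nat \<Rightarrow> nat \<Rightarrow> ledge \<Rightarrow> bool" where
  "bedge p k e \<longleftrightarrow>
     (\<exists>i l t. e = (S i, V 1 l, (p^k * t, p^k * (p - 2 - t)))
              \<and> i = p^k * t + l \<and> t \<le> p - 2 \<and> l < p^k)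
   \<or> (\<exists>s l \<beta>. s \<ge> 2 \<and> l < p^k \<and> \<beta> \<le> p - 1 \<and>
        e = (V (s - 1) l, W s (p * l + \<beta>),
             (p^k * (p - 1) - ((p - 1) * l + \<beta>), (p - 1) * l + \<beta>)))
   \<or> (\<exists>s l' t. s \<ge> 2 \<and> l' < p^(k+1) \<and> t = l' div p^k \<and>
        e = (W s l', V s (l' - p^k * t), (p^k * t, p^k * (p - 1 - t))))"

definition src :: "ledge \<Rightarrow> vert" where "src e = fst e"
definition tgt :: "ledge \<Rightarrow> vert" where "tgt e = fst (snd e)"
definition blk :: "ledge \<Rightarrow> nat \<times> nat" where "blk e = snd (snd e)"

definition is_path :: "nat \<Rightarrow> nat \<Rightarrow> vert \<Rightarrow> ledge list \<Rightarrow> bool" where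
  "is_path p k v P \<longleftrightarrow> P \<noteq> [] \<and> (\<forall>e\<in>set P. bedge p k e)
     \<and> (\<exists>i. src (hd P) = S i)
     \<and> (\<forall>j. Suc j < length P \<longrightarrow> tgt (P ! j) = src (P ! Suc j))
     \<and> tgt (last P) = v"

definition paths :: "nat \<Rightarrow> nat \<Rightarrow> vert \<Rightarrow> ledge list set" where
  "paths p k v = {P. is_path p k v P}"

text \<open>Blocks numbered B^2, ..., B^N with N = length P + 1: B^j is the block of edge number j-2.\<close>
definition hm :: "ledge list \<Rightarrow> nat \<Rightarrow> nat" where "hm P j = fst (blk (P ! (j - 2)))"
definition vn :: "ledge list \<Rightarrow> nat \<Rightarrow> nat" where "vn P j = snd (blk (P ! (j - 2)))"

definition Inv :: "nat \<Rightarrow> nat \<Rightarrow> ledge list \<Rightarrow> (nat \<times> nat) set" where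
  "Inv p k P =
     {(i, j). i = 1 \<and> j = 2 \<and> (\<exists>t. hm P 2 = p^k * t \<and> 2 * t < p - 1)}
   \<union> {(i, j). 3 \<le> i \<and> i < j \<and> j \<le> length P + 1 \<and> hm P i > hm P j \<and> vn P i < vn P j}"

definition inv :: "nat \<Rightarrow> nat \<Rightarrow> ledge list \<Rightarrow> nat" where
  "inv p k P = card (Inv p k P)"

end

theory Submission
  imports Defs
begin

fun lev :: "vert \<Rightarrow> nat" where
  "lev (S i) = 0"
| "lev (V s l) = 2 * s - 1"
| "lev (W s l) = 2 * s - 2"

lemma bedge_lev:
  assumes "bedge p k e" shows "lev (tgt e) = Suc (lev (src e))"
  using assms unfolding bedge_def src_def tgt_def by auto

lemma path_lev:
  assumes "is_path p k v P" "j < length P"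
  shows "lev (tgt (P ! j)) = Suc j"
  using assms(2)
proof (induction j)
  case 0
  then have "bedge p k (P ! 0)" using assms(1) unfolding is_path_def by auto
  moreover obtain i where "src (P ! 0) = S i" using assms(1) unfolding is_path_def
    by (metis hd_conv_nth)
  ultimately show ?case using bedge_lev by fastforce
next
  case (Suc j)
  then have "bedge p k (P ! Suc j)" using assms(1) unfolding is_path_def by auto
  moreover have "tgt (P ! j) = src (P ! Suc j)" using assms(1) Suc.prems unfolding is_path_def by auto
  ultimately show ?case using bedge_lev Suc by fastforce
qed

lemma path_len:
  assumes "is_path p k v P" shows "length P = lev v"
proof -
  have "P \<noteq> []" "tgt (last P) = v" using assms unfolding is_path_def by auto
  then show ?thesis using path_lev[OF assms, of "length P - 1"] by (simp add: last_conv_nth)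
qed

definition EN :: "nat \<Rightarrow> nat \<Rightarrow> nat \<Rightarrow> ledge set" where
  "EN p k N = {e. bedge p k e \<and> lev (tgt e) \<le> N}"

lemma EN_finite: "finite (EN p k N)"
proof -
  let ?A1 = "(\<lambda>(t,l). (S (p^k * t + l), V 1 l, (p^k * t, p^k * (p - 2 - t)))) ` ({..p} \<times> {..<p^k})"
  let ?A2 = "(\<lambda>(s,l,\<beta>). (V (s - 1) l, W s (p * l + \<beta>),
             (p^k * (p - 1) - ((p - 1) * l + \<beta>), (p - 1) * l + \<beta>))) ` ({..N+2} \<times> {..<p^k} \<times> {..p})"
  let ?A3 = "(\<lambda>(s,l'). (W s l', V s (l' - p^k * (l' div p^k)), (p^k * (l' div p^k), p^k * (p - 1 - (l' div p^k))))) ` ({..N+2} \<times> {..<p^(k+1)})"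
  have "EN p k N \<subseteq> ?A1 \<union> ?A2 \<union> ?A3"
  proof
    fix e assume "e \<in> EN p k N"
    then have b: "bedge p k e" and lv: "lev (tgt e) \<le> N" unfolding EN_def by auto
    from b consider
      (a) i l t where "e = (S i, V 1 l, (p^k * t, p^k * (p - 2 - t)))"
              "i = p^k * t + l" "t \<le> p - 2" "l < p^k"
    | (b) s l \<beta> where "s \<ge> 2" "l < p^k" "\<beta> \<le> p - 1" "e = (V (s - 1) l, W s (p * l + \<beta>),
             (p^k * (p - 1) - ((p - 1) * l + \<beta>), (p - 1) * l + \<beta>))"
    | (c) s l' t where "s \<ge> 2" "l' < p^(k+1)" "t = l' div p^k"
        "e = (W s l', V s (l' - p^k * t), (p^k * t, p^k * (p - 1 - t)))"
      unfolding bedge_def by blast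
    then show "e \<in> ?A1 \<union> ?A2 \<union> ?A3"
    proof cases
      case a
      then have "e = (\<lambda>(t,l). (S (p^k * t + l), V 1 l, (p^k * t, p^k * (p - 2 - t)))) (t,l)" by simp
      moreover have "(t,l) \<in> {..p} \<times> {..<p^k}" using a by auto
      ultimately show ?thesis by blast
    next
      case b
      then have "e = (\<lambda>(s,l,\<beta>). (V (s - 1) l, W s (p * l + \<beta>),
             (p^k * (p - 1) - ((p - 1) * l + \<beta>), (p - 1) * l + \<beta>))) (s,l,\<beta>)" by simp
      moreover have "(s,l,\<beta>) \<in> {..N+2} \<times> {..<p^k} \<times> {..p}" using b lv by (auto simp: tgt_def)
      ultimately show ?thesis by blast
    next
      case c
      then have "e = (\<lambda>(s,l'). (W s l', V s (l' - p^k * (l' div p^k)), (p^k * (l' div p^k), p^k * (p - 1 - (l' div p^k))))) (s,l')" by simp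
      moreover have "(s,l') \<in> {..N+2} \<times> {..<p^(k+1)}" using c lv by (auto simp: tgt_def)
      ultimately show ?thesis by blast
    qed
  qed
  moreover have "finite (?A1 \<union> ?A2 \<union> ?A3)" by auto
  ultimately show ?thesis by (rule finite_subset)
qed

lemma paths_finite: "finite (paths p k v)"
proof -
  have "paths p k v \<subseteq> {xs. set xs \<subseteq> EN p k (lev v) \<and> length xs = lev v}"
  proof
    fix P assume "P \<in> paths p k v"
    then have P: "is_path p k v P" unfolding paths_def by auto
    have "set P \<subseteq> EN p k (lev v)"
    proof
      fix e assume "e \<in> set P"
      then obtain j where j: "j < length P" "e = P ! j" by (metis in_set_conv_nth)
      have "bedge p k e" using P \<open>e \<in> set P\<close> unfolding is_path_def by auto
      moreover have "lev (tgt e) \<le> lev v" using path_lev[OF P j(1)] path_len[OF P] j by simp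
      ultimately show "e \<in> EN p k (lev v)" unfolding EN_def by auto
    qed
    then show "P \<in> {xs. set xs \<subseteq> EN p k (lev v) \<and> length xs = lev v}" using path_len[OF P] by auto
  qed
  then show ?thesis using finite_lists_length_eq[OF EN_finite] finite_subset by blast
qed


definition flipe :: "nat \<Rightarrow> nat \<Rightarrow> ledge \<Rightarrow> ledge" where
  "flipe p k e = (let t = fst (blk e) div p^k; t' = (t + (p - 1) div 2) mod (p - 1);
      l = (case tgt e of V _ l \<Rightarrow> l | _ \<Rightarrow> 0)
     in (S (p^k * t' + l), tgt e, (p^k * t', p^k * (p - 2 - t'))))"

definition hP :: "nat \<Rightarrow> nat \<Rightarrow> ledge list \<Rightarrow> ledge list" where
  "hP p k P = P[0 := flipe p k (P ! 0)]"

lemma first_edge: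
  assumes "is_path p k v P"
  obtains l t where "P ! 0 = (S (p^k * t + l), V 1 l, (p^k * t, p^k * (p - 2 - t)))"
    "t \<le> p - 2" "l < p^k"
proof -
  have ne: "P \<noteq> []" using assms unfolding is_path_def by auto
  have b: "bedge p k (P ! 0)" using assms ne unfolding is_path_def by auto
  obtain i where "src (P ! 0) = S i" using assms ne unfolding is_path_def by (metis hd_conv_nth)
  with b show ?thesis using that unfolding bedge_def src_def by auto
qed

lemma flipe_eq:
  assumes "p > 0"
  shows "flipe p k (S (p^k * t + l), V 1 l, (p^k * t, p^k * (p - 2 - t)))
    = (S (p^k * ((t + (p - 1) div 2) mod (p - 1)) + l), V 1 l,
        (p^k * ((t + (p - 1) div 2) mod (p - 1)), p^k * (p - 2 - ((t + (p - 1) div 2) mod (p - 1)))))"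
  using assms unfolding flipe_def by (simp add: blk_def tgt_def Let_def)

lemma tt:
  fixes p t :: nat
  assumes "odd p" "p \<ge> 3" "t \<le> p - 2"
  shows "((t + (p - 1) div 2) mod (p - 1) + (p - 1) div 2) mod (p - 1) = t"
    "(t + (p - 1) div 2) mod (p - 1) \<le> p - 2"
    "2 * ((t + (p - 1) div 2) mod (p - 1)) < p - 1 \<longleftrightarrow> \<not> 2 * t < p - 1"
proof -
  define q where "q = (p - 1) div 2"
  have q: "p - 1 = 2 * q" "q \<ge> 1" using assms unfolding q_def by (auto elim!: oddE)
  have qd: "(p - 1) div 2 = q" using q by simp
  have tl: "t < 2 * q" using assms q by linarith
  have c: "(t + q) mod (2*q) = (if t < q then t + q else t - q)"
  proof (cases "t < q")
    case True then show ?thesis by simp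
  next
    case False
    then have "t + q = (t - q) + 1 * (2*q)" by simp
    then have "(t + q) mod (2*q) = (t - q) mod (2*q)" by (metis mod_mult_self1)
    then show ?thesis using False tl by simp
  qed
  show "((t + (p - 1) div 2) mod (p - 1) + (p - 1) div 2) mod (p - 1) = t"
  proof (cases "t < q")
    case True
    have "(t + q + q) mod (2*q) = (t + 1 * (2*q)) mod (2*q)" by (simp add: mult_2 add.assoc)
    also have "\<dots> = t" using tl by (simp only: mod_mult_self1) simp
    finally show ?thesis unfolding qd unfolding q(1) c using True by simp
  next
    case False
    have "(t - q + q) mod (2*q) = t" using False tl by simp
    moreover have "(t + q) mod (2*q) = t - q" using c False by simp
    ultimately show ?thesis unfolding qd unfolding q(1) by simp
  qed
  have "(t + q) mod (2*q) < 2 * q" using q by simp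
  then show "(t + (p - 1) div 2) mod (p - 1) \<le> p - 2"
    unfolding qd unfolding q(1) using q by linarith
  show "2 * ((t + (p - 1) div 2) mod (p - 1)) < p - 1 \<longleftrightarrow> \<not> 2 * t < p - 1"
  proof (cases "t < q")
    case True
    then have "(t + q) mod (2*q) = t + q" using c by simp
    then show ?thesis unfolding qd unfolding q(1) using True by simp
  next
    case False
    then have "(t + q) mod (2*q) = t - q" using c by simp
    then show ?thesis unfolding qd unfolding q(1) using False tl by simp
  qed
qed


lemma hP_facts:
  assumes P: "is_path p k v P" and pr: "odd p" "p \<ge> 3"
  shows "is_path p k v (hP p k P)" "hP p k (hP p k P) = P"
    "inv p k (hP p k P) = (if (\<exists>t. hm P 2 = p^k * t \<and> 2 * t < p - 1) then 0 else 1)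
        + card {(i, j). 3 \<le> i \<and> i < j \<and> j \<le> length P + 1 \<and> hm P i > hm P j \<and> vn P i < vn P j}"
    "inv p k P = (if (\<exists>t. hm P 2 = p^k * t \<and> 2 * t < p - 1) then 1 else 0)
        + card {(i, j). 3 \<le> i \<and> i < j \<and> j \<le> length P + 1 \<and> hm P i > hm P j \<and> vn P i < vn P j}"
proof -
  obtain l t where e0: "P ! 0 = (S (p^k * t + l), V 1 l, (p^k * t, p^k * (p - 2 - t)))"
    and t: "t \<le> p - 2" and l: "l < p^k" using first_edge[OF P] by blast
  have ne: "P \<noteq> []" using P unfolding is_path_def by auto
  define t' where "t' = (t + (p - 1) div 2) mod (p - 1)"
  have p0: "p > 0" using pr by simp
  have pk0: "p^k > 0" using p0 by simp
  have f0: "flipe p k (P ! 0) = (S (p^k * t' + l), V 1 l, (p^k * t', p^k * (p - 2 - t')))"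
    unfolding e0 t'_def by (rule flipe_eq[OF p0])
  have t'le: "t' \<le> p - 2" unfolding t'_def using tt[OF pr t] by simp
  have t'': "(t' + (p - 1) div 2) mod (p - 1) = t" unfolding t'_def using tt[OF pr t] by simp
  have ct: "2 * t' < p - 1 \<longleftrightarrow> \<not> 2 * t < p - 1" unfolding t'_def using tt[OF pr t] by simp
  have hPn: "hP p k P ! j = (if j = 0 then flipe p k (P ! 0) else P ! j)" if "j < length P" for j
    unfolding hP_def using that by (auto simp: nth_list_update)
  have len: "length (hP p k P) = length P" unfolding hP_def by simp
  have bf: "bedge p k (flipe p k (P ! 0))" unfolding f0 bedge_def using t'le l by auto
  have tgtf: "tgt (flipe p k (P ! 0)) = tgt (P ! 0)" unfolding f0 by (simp add: e0 tgt_def)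
  show "is_path p k v (hP p k P)"
    unfolding is_path_def
  proof (intro conjI allI impI)
    show "hP p k P \<noteq> []" using ne len by auto
    show "\<forall>e\<in>set (hP p k P). bedge p k e"
    proof
      fix e assume "e \<in> set (hP p k P)"
      then obtain j where j: "j < length P" "e = hP p k P ! j" using len by (metis in_set_conv_nth)
      show "bedge p k e"
      proof (cases "j = 0")
        case True then show ?thesis using j hPn bf by simp
      next
        case False then show ?thesis using j hPn P unfolding is_path_def by auto
      qed
    qed
    show "\<exists>i. src (hd (hP p k P)) = S i"
    proof -
      have "hP p k P \<noteq> []" using ne len by auto
      then have "hd (hP p k P) = hP p k P ! 0" by (simp add: hd_conv_nth)
      then show ?thesis using hPn[of 0] ne f0 by (simp add: src_def)
    qed
    fix j assume j: "Suc j < length (hP p k P)"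
    then show "tgt (hP p k P ! j) = src (hP p k P ! Suc j)"
      using hPn[of j] hPn[of "Suc j"] tgtf P len unfolding is_path_def by (cases "j = 0") auto
  next
    have "hP p k P \<noteq> []" using ne len by auto
    then have "last (hP p k P) = hP p k P ! (length P - 1)" using len by (simp add: last_conv_nth)
    then show "tgt (last (hP p k P)) = v"
      using hPn[of "length P - 1"] tgtf P ne unfolding is_path_def
      by (cases "length P - 1 = 0") (auto simp: last_conv_nth)
  qed
  have "flipe p k (flipe p k (P ! 0)) = P ! 0"
    unfolding f0 flipe_eq[OF p0] unfolding t'' e0 by (rule refl)
  then show "hP p k (hP p k P) = P"
    unfolding hP_def using ne by (simp add: list_update_same_conv)
  have hm2: "hm P 2 = p^k * t" unfolding hm_def blk_def by (simp add: e0)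
  have hm2': "hm (hP p k P) 2 = p^k * t'" unfolding hm_def blk_def using hPn[of 0] ne f0 by simp
  have cP: "(\<exists>u. hm P 2 = p^k * u \<and> 2 * u < p - 1) \<longleftrightarrow> 2 * t < p - 1"
    unfolding hm2 using pk0 by auto
  have cP': "(\<exists>u. hm (hP p k P) 2 = p^k * u \<and> 2 * u < p - 1) \<longleftrightarrow> \<not> 2 * t < p - 1"
    unfolding hm2' using pk0 ct by auto
  have hmj: "hm (hP p k P) i = hm P i" "vn (hP p k P) i = vn P i" if "3 \<le> i" "i \<le> length P + 1" for i
    using hPn[of "i - 2"] that unfolding hm_def vn_def by auto
  define X where "X Q = {(i, j). 3 \<le> i \<and> i < j \<and> j \<le> length Q + 1 \<and> hm Q i > hm Q j \<and> vn Q i < vn Q j}" for Q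
  have XX: "X (hP p k P) = X P" unfolding X_def len using hmj
    by (auto; metis (no_types, lifting) dual_order.strict_trans1 less_imp_le_nat hmj)+
  have fX: "finite (X Q)" for Q
    by (rule finite_subset[of _ "{..length Q + 1} \<times> {..length Q + 1}"]) (auto simp: X_def)
  have invQ: "inv p k Q = (if (\<exists>u. hm Q 2 = p^k * u \<and> 2 * u < p - 1) then 1 else 0) + card (X Q)" for Q
  proof -
    have "Inv p k Q = {(i, j). i = 1 \<and> j = 2 \<and> (\<exists>u. hm Q 2 = p^k * u \<and> 2 * u < p - 1)} \<union> X Q"
      unfolding Inv_def X_def by simp
    moreover have "({(i, j). i = 1 \<and> j = 2 \<and> (\<exists>u. hm Q 2 = p^k * u \<and> 2 * u < p - 1)} :: (nat \<times> nat) set)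
        = (if (\<exists>u. hm Q 2 = p^k * u \<and> 2 * u < p - 1) then {(1,2)} else {})" by auto
    ultimately have I: "Inv p k Q = (if (\<exists>u. hm Q 2 = p^k * u \<and> 2 * u < p - 1) then {(1,2)} else {}) \<union> X Q"
      by simp
    have "(1::nat,2::nat) \<notin> X Q" unfolding X_def by auto
    then show ?thesis unfolding inv_def I using fX[of Q] by auto
  qed
  show "inv p k (hP p k P) = (if (\<exists>t. hm P 2 = p^k * t \<and> 2 * t < p - 1) then 0 else 1)
        + card {(i, j). 3 \<le> i \<and> i < j \<and> j \<le> length P + 1 \<and> hm P i > hm P j \<and> vn P i < vn P j}"
    using invQ[of "hP p k P"] XX cP cP' unfolding X_def by simp
  show "inv p k P = (if (\<exists>t. hm P 2 = p^k * t \<and> 2 * t < p - 1) then 1 else 0)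
        + card {(i, j). 3 \<le> i \<and> i < j \<and> j \<le> length P + 1 \<and> hm P i > hm P j \<and> vn P i < vn P j}"
    using invQ[of P] unfolding X_def by simp
qed

lemma paths_sum:
  assumes "odd p" "p \<ge> 3"
  shows "(\<Sum>P\<in>paths p k v. (-1::int) ^ inv p k P) = 0"
proof -
  have sg: "(-1::int) ^ inv p k (hP p k P) = - ((-1::int) ^ inv p k P)" if "is_path p k v P" for P
    using hP_facts(3,4)[OF that assms] by (auto simp: power_add)
  have "(\<Sum>P\<in>paths p k v. (-1::int) ^ inv p k P) = (\<Sum>P\<in>paths p k v. - ((-1::int) ^ inv p k P))"
    by (rule sum.reindex_bij_witness[of _ "hP p k" "hP p k"])
      (auto simp: paths_def hP_facts[OF _ assms] sg)
  then show ?thesis by (simp add: sum_negf)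
qed

theorem mainTheorem1:
  fixes p k s l l' :: nat
  assumes "prime p" and "odd p" and "1 \<le> s" and "l < p ^ k" and "l' < p ^ (k + 1)"
  shows "finite (paths p k (V s l))
       \<and> (\<Sum>P\<in>paths p k (V s l). (-1::int) ^ inv p k P) = 0
       \<and> finite (paths p k (W (s + 1) l'))
       \<and> (\<Sum>P\<in>paths p k (W (s + 1) l'). (-1::int) ^ inv p k P) = 0"
proof -
  have "p \<ge> 2" using assms(1) prime_ge_2_nat by blast
  moreover have "p \<noteq> 2" using assms(2) by auto
  ultimately have "p \<ge> 3" by simp
  then show ?thesis using paths_finite paths_sum[OF assms(2)] by blast
qed

end
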